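(* Let $r\ge 3$ be an integer. Every $\mathrm{T}_r$-free $r$-graph $\mathcal{H}$ with $\delta_{r-1}^{+}(\mathcal{H})\ge r$ is $\Sigma_r$-free; that is, there are no three edges $A,B,C\in\mathcal{H}$ with $|A\cap B|=r-1$ and $A\triangle B\subseteq C$.
   Context: An $r$-graph $\mathcal{H}$ is a collection of $r$-subsets (edges) of a finite vertex set $V(\mathcal{H})$. The shadow is $\partial\mathcal{H}=\{e\in\binom{V(\mathcal{H})}{r-1}\colon e\subseteq E \text{ for some } E\in\mathcal{H}\}$. For $e\in\partial\mathcal{H}$, $N_{\mathcal{H}}(e)=\{v\in V(\mathcal{H})\colon e\cup\{v\}\in\mathcal{H}\}$. The minimum positive codegree is $\delta_{r-1}^{+}(\mathcal{H})=\min\{|N_{\mathcal{H}}(e)|\colon e\in\partial\mathcal{H}\}$. The $r$-uniform generalized triangle is $\mathrm{T}_r=\{\{1,\ldots,r-1,r\},\{1,\ldots,r-1,r+1\},\{r,r+1,\ldots,2r-1\}\}$; $\mathcal{H}$ is $\mathrm{T}_r$-free if it contains no subhypergraph isomorphic to $\mathrm{T}_r$. $\Sigma_r$ denotes the family of $r$-graphs consisting of three edges $A,B,C$ with $|A\cap B|=r-1$ and $A\triangle B\subseteq C$ (symmetric difference). *)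

theory Defs
  imports Main
begin

definition r_graph :: "nat \<Rightarrow> 'a set \<Rightarrow> 'a set set \<Rightarrow> bool" where
  "r_graph r V H \<longleftrightarrow> finite V \<and> (\<forall>E\<in>H. E \<subseteq> V \<and> card E = r)"

definition shadow :: "nat \<Rightarrow> 'a set set \<Rightarrow> 'a set set" where
  "shadow r H = {e. card e = r - 1 \<and> (\<exists>E\<in>H. e \<subseteq> E)}"

definition nbhd :: "'a set \<Rightarrow> 'a set set \<Rightarrow> 'a set \<Rightarrow> 'a set" where
  "nbhd V H e = {v \<in> V. insert v e \<in> H}"

definition min_pos_codegree :: "nat \<Rightarrow> 'a set \<Rightarrow> 'a set set \<Rightarrow> nat" where
  "min_pos_codegree r V H = Min ((\<lambda>e. card (nbhd V H e)) ` shadow r H)"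

definition gen_triangle :: "nat \<Rightarrow> nat set set" where
  "gen_triangle r = {{1..r}, insert (r+1) {1..r-1}, {r..2*r-1}}"

definition contains_copy :: "'b set set \<Rightarrow> 'a set set \<Rightarrow> bool" where
  "contains_copy F H \<longleftrightarrow> (\<exists>f. inj_on f (\<Union>F) \<and> (\<forall>E\<in>F. f ` E \<in> H))"

definition T_free :: "nat \<Rightarrow> 'a set set \<Rightarrow> bool" where
  "T_free r H \<longleftrightarrow> \<not> contains_copy (gen_triangle r) H"

definition Sigma_free :: "nat \<Rightarrow> 'a set set \<Rightarrow> bool" where
  "Sigma_free r H \<longleftrightarrow> \<not> (\<exists>A\<in>H. \<exists>B\<in>H. \<exists>C\<in>H.
      card (A \<inter> B) = r - 1 \<and> (A - B) \<union> (B - A) \<subseteq> C)"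

end

theory Submission
  imports Defs
begin

lemma reduce_step:
  assumes rg: "r_graph r V H"
    and md: "min_pos_codegree r V H \<ge> r"
    and S: "S \<subseteq> V" "card S = r - 1"
    and C: "C \<in> H" "a \<in> C" "b \<in> C" "a \<notin> S" "b \<notin> S"
    and s: "s \<in> C \<inter> S"
  shows "\<exists>C'\<in>H. a \<in> C' \<and> b \<in> C' \<and> C' \<inter> S = (C \<inter> S) - {s}"
proof -
  have finV: "finite V" and CV: "C \<subseteq> V" and cC: "card C = r" using rg C unfolding r_graph_def by auto
  define e where "e = C - {s}"
  have finC: "finite C" using finV CV finite_subset by blast
  have "C \<noteq> {}" using s by blast
  hence "card C > 0" using finC by (simp add: card_gt_0_iff)
  hence r1: "r \<ge> 1" using cC by simp
  have ce: "card e = r - 1" using cC s finC unfolding e_def by auto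
  have esh: "e \<in> shadow r H" unfolding shadow_def e_def using ce C(1) e_def by auto
  have "finite (shadow r H)"
  proof -
    have "shadow r H \<subseteq> Pow V" unfolding shadow_def using rg unfolding r_graph_def by auto
    thus ?thesis using finV finite_subset by blast
  qed
  hence "min_pos_codegree r V H \<le> card (nbhd V H e)" unfolding min_pos_codegree_def
    using esh by (intro Min_le) auto
  hence cn: "card (nbhd V H e) \<ge> r" using md by simp
  have finS: "finite S" using S finV finite_subset by blast
  have fe: "finite e" using finC unfolding e_def by auto
  have "v \<notin> e" if "v \<in> nbhd V H e" for v
  proof
    assume "v \<in> e"
    hence "insert v e = e" by auto
    moreover have "insert v e \<in> H" using that unfolding nbhd_def by auto
    hence "card (insert v e) = r" using rg unfolding r_graph_def by blast
    ultimately have "card e = r" by simp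
    thus False using ce r1 by simp
  qed
  hence "nbhd V H e \<subseteq> S - e \<union> (nbhd V H e - S)" by auto
  moreover have "card (S - e) < r"
  proof -
    have "S - e \<subseteq> S" by auto
    hence "card (S - e) \<le> card S" using finS by (rule card_mono[rotated])
    hence "card (S - e) \<le> r - 1" using S(2) by simp
    thus ?thesis using r1 by linarith
  qed
  ultimately have "nbhd V H e - S \<noteq> {}"
  proof -
    assume sub: "nbhd V H e \<subseteq> S - e \<union> (nbhd V H e - S)" and lt: "card (S - e) < r"
    show ?thesis
    proof
      assume "nbhd V H e - S = {}"
      hence "nbhd V H e \<subseteq> S - e" using sub by auto
      hence "card (nbhd V H e) \<le> card (S - e)" using finS by (intro card_mono) auto
      thus False using lt cn by simp
    qed
  qed
  then obtain v where v: "v \<in> nbhd V H e" "v \<notin> S" by blast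
  have "insert v e \<in> H" using v unfolding nbhd_def by auto
  moreover have "a \<in> insert v e" "b \<in> insert v e" using C s unfolding e_def by auto
  moreover have "insert v e \<inter> S = (C \<inter> S) - {s}" using v(2) unfolding e_def by auto
  ultimately show ?thesis by (intro bexI[of _ "insert v e"]) auto
qed

lemma reduce:
  assumes rg: "r_graph r V H"
    and md: "min_pos_codegree r V H \<ge> r"
    and S: "S \<subseteq> V" "card S = r - 1"
  shows "\<And>C. C \<in> H \<Longrightarrow> a \<in> C \<Longrightarrow> b \<in> C \<Longrightarrow> a \<notin> S \<Longrightarrow> b \<notin> S \<Longrightarrow> card (C \<inter> S) = n
     \<Longrightarrow> \<exists>C'\<in>H. a \<in> C' \<and> b \<in> C' \<and> C' \<inter> S = {}"
proof (induct n)
  case 0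
  have "finite S" using S rg unfolding r_graph_def using finite_subset by blast
  then show ?case using 0 by auto
next
  case (Suc n)
  have fin: "finite (C \<inter> S)" using Suc.prems(6) by (simp add: card_ge_0_finite)
  have "C \<inter> S \<noteq> {}" using Suc.prems(6) by auto
  then obtain s where s: "s \<in> C \<inter> S" by blast
  obtain C' where C': "C' \<in> H" "a \<in> C'" "b \<in> C'" "C' \<inter> S = (C \<inter> S) - {s}"
    using reduce_step[OF rg md S Suc.prems(1-5) s] by blast
  have "card (C' \<inter> S) = n" unfolding C'(4) using fin s Suc.prems(6) by (simp add: card_Diff_singleton)
  from Suc.hyps[OF C'(1,2,3) Suc.prems(4,5) this] show ?case .
qed

theorem proposition2p1:
  fixes r :: nat and V :: "'a set" and H :: "'a set set"
  assumes "r \<ge> 3"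
    and "r_graph r V H"
    and "T_free r H"
    and "min_pos_codegree r V H \<ge> r"
  shows "Sigma_free r H"
proof (rule ccontr)
  assume "\<not> Sigma_free r H"
  then obtain A B C0 where AB: "A \<in> H" "B \<in> H" "C0 \<in> H" "card (A \<inter> B) = r - 1"
    "(A - B) \<union> (B - A) \<subseteq> C0" unfolding Sigma_free_def by blast
  have finV: "finite V" using assms(2) unfolding r_graph_def by auto
  have AV: "A \<subseteq> V" "card A = r" "B \<subseteq> V" "card B = r" using assms(2) AB unfolding r_graph_def by auto
  have finA: "finite A" "finite B" using AV finV finite_subset by blast+
  define S where "S = A \<inter> B"
  have cAB: "card (A - B) = 1" using card_Diff_subset_Int[of A B] finA AV AB(4) assms(1)
    by (simp add: Int_commute Diff_Int2 card_Diff_subset_Int)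
  have cBA: "card (B - A) = 1" using card_Diff_subset_Int[of B A] finA AV AB(4) assms(1)
    by (simp add: Int_commute)
  obtain a where a: "A - B = {a}" using cAB card_1_singletonE by blast
  obtain b where b: "B - A = {b}" using cBA card_1_singletonE by blast
  have Aeq: "A = insert a S" using a unfolding S_def by blast
  have Beq: "B = insert b S" using b unfolding S_def by blast
  have ab: "a \<notin> S" "b \<notin> S" "a \<noteq> b" using a b unfolding S_def by blast+
  have SV: "S \<subseteq> V" "card S = r - 1" using AV AB(4) unfolding S_def by auto
  have "a \<in> C0" "b \<in> C0" using AB(5) a b by auto
  then obtain C where C: "C \<in> H" "a \<in> C" "b \<in> C" "C \<inter> S = {}"
    using reduce[OF assms(2) assms(4) SV AB(3) _ _ ab(1,2) refl] by blast
  have CV: "C \<subseteq> V" "card C = r" using assms(2) C unfolding r_graph_def by auto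
  have finC: "finite C" using CV finV finite_subset by blast
  have finS: "finite S" using SV finV finite_subset by blast
  obtain g where g: "bij_betw g {1..r-1} S"
    using finite_same_card_bij[of "{1..r-1}" S] finS SV by auto
  have cD: "card (C - {a, b}) = r - 2" using CV C ab finC by (simp add: card_Diff_subset)
  obtain h where h: "bij_betw h {r+2..2*r-1} (C - {a,b})"
    using finite_same_card_bij[of "{r+2..2*r-1}" "C - {a,b}"] finC cD assms(1) by auto
  define f where "f i = (if i \<le> r - 1 then g i else if i = r then a else if i = r + 1 then b else h i)" for i
  have U: "\<Union>(gen_triangle r) = {1..2*r-1}" unfolding gen_triangle_def using assms(1) by auto
  have fimg1: "f ` {1..r-1} = S"
  proof -
    have "f ` {1..r-1} = g ` {1..r-1}" by (rule image_cong) (auto simp: f_def)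
    thus ?thesis using g unfolding bij_betw_def by simp
  qed
  have fimg2: "f ` {r+2..2*r-1} = C - {a,b}"
  proof -
    have "f ` {r+2..2*r-1} = h ` {r+2..2*r-1}" by (rule image_cong) (auto simp: f_def)
    thus ?thesis using h unfolding bij_betw_def by simp
  qed
  have gS: "\<And>i. i \<in> {1..r-1} \<Longrightarrow> g i \<in> S" using g unfolding bij_betw_def by auto
  have hS: "\<And>i. i \<in> {r+2..2*r-1} \<Longrightarrow> h i \<in> C - {a,b}" using h unfolding bij_betw_def by auto
  have gi: "inj_on g {1..r-1}" "inj_on h {r+2..2*r-1}" using g h unfolding bij_betw_def by auto
  have c1: "\<And>i. i \<in> {1..2*r-1} \<Longrightarrow> i \<le> r - 1 \<Longrightarrow> f i = g i \<and> f i \<in> S"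
    using gS unfolding f_def by auto
  have c2: "f r = a" "f (r+1) = b" using assms(1) unfolding f_def by auto
  have c4: "\<And>i. i \<in> {1..2*r-1} \<Longrightarrow> i \<ge> r + 2 \<Longrightarrow> f i = h i \<and> f i \<in> C - {a,b}"
  proof -
    fix i assume "i \<in> {1..2*r-1}" "i \<ge> r + 2"
    moreover hence "f i = h i" unfolding f_def by auto
    ultimately show "f i = h i \<and> f i \<in> C - {a,b}" using hS by auto
  qed
  have inj: "inj_on f {1..2*r-1}"
  proof (rule eq_card_imp_inj_on)
    have dom: "{1..2*r-1} = {1..r-1} \<union> {r, r+1} \<union> {r+2..2*r-1}" using assms(1) by auto
    have "f ` {1..2*r-1} = f ` {1..r-1} \<union> f ` {r, r+1} \<union> f ` {r+2..2*r-1}"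
      unfolding dom by (simp only: image_Un)
    also have "\<dots> = S \<union> C" using fimg1 fimg2 c2 C by auto
    finally have "card (f ` {1..2*r-1}) = card (S \<union> C)" by simp
    also have "\<dots> = card S + card C" using finS finC C(4) by (simp add: card_Un_disjoint Int_commute)
    also have "\<dots> = card {1..2*r-1}" using SV CV assms(1) by simp
    finally show "card (f ` {1..2*r-1}) = card {1..2*r-1}" .
  qed simp
  have fr: "f r = a" "f (r+1) = b" using assms(1) unfolding f_def by auto
  have e1: "f ` {1..r} = A"
  proof -
    have "{1..r} = insert r {1..r-1}" using assms(1) by auto
    thus ?thesis using fimg1 fr Aeq by simp
  qed
  have e2: "f ` insert (r+1) {1..r-1} = B" using fimg1 fr Beq by simp
  have e3: "f ` {r..2*r-1} = C"
  proof -
    have "{r..2*r-1} = insert r (insert (r+1) {r+2..2*r-1})" using assms(1) by auto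
    hence "f ` {r..2*r-1} = insert a (insert b (C - {a,b}))" using fimg2 fr by simp
    also have "\<dots> = C" using C by auto
    finally show ?thesis .
  qed
  have "\<forall>E\<in>gen_triangle r. f ` E \<in> H"
    unfolding gen_triangle_def using e1 e2 e3 AB(1,2) C(1) by simp
  hence "contains_copy (gen_triangle r) H" unfolding contains_copy_def U
    using inj by blast
  thus False using assms(3) unfolding T_free_def by simp
qed

end
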